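(* Let $G$ be a graph on $[n]$ such that every $3$-subset of $[n]$ contains an edge of $G$. Then $E(G)$ dominates $B(n)$, where $B(n)=\{\{a,b\}: 1\le a<b\le n,\ a+b\le n\}$.
   Context: Let $X=(x_{ij})_{1\le i,j\le n}$ be a matrix of $n^2$ independent indeterminates over $\mathbb{Q}$, and for $1\le k\le n$ let $C_k(X)=(c_{S,T})$ be its $k$-th compound matrix: rows and columns are indexed by $k$-subsets $S,T$ of $[n]$, and $c_{S,T}=\det(x_{ij})_{i\in S,j\in T}$, computed in the field $\mathbb{Q}(x_{ij})$. For two families $F_1,F_2$ of $k$-subsets of $[n]$, $F_1$ dominates $F_2$ if the submatrix of $C_k(X)$ with rows indexed by $F_2$ and columns indexed by $F_1$ has rank $|F_2|$. A graph is identified with its set of edges, a family of $2$-subsets. *)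

theory Defs
  imports "HOL-Library.Poly_Mapping" "HOL-Library.Product_Lexorder" "HOL-Computational_Algebra.Fraction_Field"
    "Jordan_Normal_Form.DL_Rank"
begin

text \<open>Polynomials over Q in the indeterminates x_ij (indexed by pairs (i,j)),
  and the field Q(x_ij) as their fraction field.\<close>
type_synonym mpoly = "((nat \<times> nat) \<Rightarrow>\<^sub>0 nat) \<Rightarrow>\<^sub>0 rat"
type_synonym ratfun = "mpoly fract"

definition var :: "nat \<Rightarrow> nat \<Rightarrow> ratfun" where
  "var i j = Fract (Poly_Mapping.single (Poly_Mapping.single (i, j) 1) 1) 1"

text \<open>Entry c_{S,T} of the compound matrix: the minor of X with rows S and columns T.\<close>
definition minor :: "nat set \<Rightarrow> nat set \<Rightarrow> ratfun" where
  "minor S T = det (mat (card S) (card S)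
     (\<lambda>(a, b). var (sorted_list_of_set S ! a) (sorted_list_of_set T ! b)))"

text \<open>An arbitrary enumeration of a finite family (rank does not depend on it).\<close>
definition enum_fam :: "'a set \<Rightarrow> 'a list" where
  "enum_fam F = (SOME xs. set xs = F \<and> distinct xs)"

definition compound_submat :: "nat set set \<Rightarrow> nat set set \<Rightarrow> ratfun mat" where
  "compound_submat F2 F1 = mat (card F2) (card F1)
     (\<lambda>(a, b). minor (enum_fam F2 ! a) (enum_fam F1 ! b))"

definition dominates :: "nat set set \<Rightarrow> nat set set \<Rightarrow> bool" where
  "dominates F1 F2 =
     (vec_space.rank (card F2) (compound_submat F2 F1) = card F2)"

definition B :: "nat \<Rightarrow> nat set set" where
  "B n = {{a, b} | a b. 1 \<le> a \<and> a < b \<and> b \<le> n \<and> a + b \<le> n}"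

end

theory Submission
  imports Defs
begin


definition m2 :: "(nat \<Rightarrow> nat \<Rightarrow> rat) \<Rightarrow> nat set \<Rightarrow> nat set \<Rightarrow> rat" where
  "m2 X S T = X (Min S) (Min T) * X (Max S) (Max T) - X (Min S) (Max T) * X (Max S) (Min T)"

definition Bk :: "nat \<Rightarrow> nat \<Rightarrow> nat set set" where
  "Bk lo k = {{a,b} | a b. lo \<le> a \<and> a < b \<and> b < lo + k \<and> a + b + 1 < 2*lo + k}"

lemma Bk_sub: "Bk lo k \<subseteq> Pow {lo..<lo+k}"
  unfolding Bk_def by auto

lemma Bk_finite: "finite (Bk lo k)"
  by (rule finite_subset[OF Bk_sub]) simp

lemma Bk_intro: "lo \<le> a \<Longrightarrow> a < b \<Longrightarrow> b < lo + k \<Longrightarrow> a + b + 1 < 2*lo + k \<Longrightarrow> {a,b} \<in> Bk lo k"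
  unfolding Bk_def by blast

lemma Bk_elem: "S \<in> Bk lo k \<Longrightarrow> \<exists>a b. S = {a,b} \<and> lo \<le> a \<and> a < b \<and> b + 1 < lo + k"
  unfolding Bk_def by (elim CollectE exE conjE) (intro exI conjI, assumption+, linarith)

lemma Bk_split: "Bk lo (Suc (Suc k)) = (\<lambda>b. {lo,b}) ` {Suc lo..<Suc lo+k} \<union> Bk (Suc lo) k"
proof
  show "Bk lo (Suc (Suc k)) \<subseteq> (\<lambda>b. {lo,b}) ` {Suc lo..<Suc lo+k} \<union> Bk (Suc lo) k"
  proof
    fix S assume "S \<in> Bk lo (Suc (Suc k))"
    then obtain a b where S: "S = {a,b}" "lo \<le> a" "a < b" "b < lo + Suc (Suc k)" "a + b + 1 < 2*lo + Suc (Suc k)"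
      unfolding Bk_def by auto
    show "S \<in> (\<lambda>b. {lo,b}) ` {Suc lo..<Suc lo+k} \<union> Bk (Suc lo) k"
    proof (cases "a = lo")
      case True
      then have "b \<in> {Suc lo..<Suc lo+k}" using S by auto
      then have "S \<in> (\<lambda>b. {lo,b}) ` {Suc lo..<Suc lo+k}" using S True by blast
      then show ?thesis by blast
    next
      case False
      then have "S \<in> Bk (Suc lo) k" unfolding S(1) by (rule_tac Bk_intro) (use S False in simp)+
      then show ?thesis by blast
    qed
  qed
next
  show "(\<lambda>b. {lo,b}) ` {Suc lo..<Suc lo+k} \<union> Bk (Suc lo) k \<subseteq> Bk lo (Suc (Suc k))"
  proof
    fix S assume "S \<in> (\<lambda>b. {lo,b}) ` {Suc lo..<Suc lo+k} \<union> Bk (Suc lo) k"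
    then show "S \<in> Bk lo (Suc (Suc k))"
    proof
      assume "S \<in> (\<lambda>b. {lo,b}) ` {Suc lo..<Suc lo+k}"
      then obtain b where "S = {lo,b}" "Suc lo \<le> b" "b < Suc lo + k" by auto
      then show ?thesis by (simp only:) (rule Bk_intro, simp_all)
    next
      assume "S \<in> Bk (Suc lo) k"
      then obtain a b where S: "S = {a,b}" "Suc lo \<le> a" "a < b" "b < Suc lo + k" "a + b + 1 < 2*(Suc lo) + k"
        unfolding Bk_def by auto
      then show ?thesis by (simp only:) (rule Bk_intro, simp_all)
    qed
  qed
qed

lemma Bk_disj: "(\<lambda>b. {lo,b}) ` {Suc lo..<Suc lo+k} \<inter> Bk (Suc lo) k = {}"
proof -
  have "S \<notin> Bk (Suc lo) k" if "lo \<in> S" for S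
    using Bk_sub[of "Suc lo" k] that by fastforce
  then show ?thesis by blast
qed

lemma inj_pair: "inj_on (\<lambda>b. {lo,b}) {Suc lo..<Suc lo+k}"
  by (auto simp: inj_on_def doubleton_eq_iff)

lemma sum_Bk_split:
  "(\<Sum>S\<in>Bk lo (Suc (Suc k)). F S) = (\<Sum>b\<in>{Suc lo..<Suc lo+k}. F {lo,b}) + (\<Sum>S\<in>Bk (Suc lo) k. F S)"
  unfolding Bk_split
  by (subst sum.union_disjoint) (simp_all only: Bk_finite Bk_disj sum.reindex[OF inj_pair] finite_imageI finite_atLeastLessThan o_def)

lemma card_Bk_split: "card (Bk lo (Suc (Suc k))) = k + card (Bk (Suc lo) k)"
  unfolding Bk_split
  apply (subst card_Un_disjoint)
     apply (rule finite_imageI, rule finite_atLeastLessThan)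
    apply (rule Bk_finite)
   apply (rule Bk_disj)
  apply (subst card_image[OF inj_pair])
  apply simp
  done

lemma sum_rows_split:
  "(\<Sum>b\<in>{lo..<lo+Suc (Suc k)}. F b) = F lo + F (lo+k+1) + (\<Sum>b\<in>{Suc lo..<Suc lo+k}. F b)"
proof -
  have "{lo..<lo+Suc (Suc k)} = insert lo (insert (lo+k+1) {Suc lo..<Suc lo+k})" by auto
  then show ?thesis by (simp add: add.assoc)
qed

lemma m2_pair_lt: "a < b \<Longrightarrow> z < w \<Longrightarrow> m2 X {a,b} {z,w} = X a z * X b w - X a w * X b z"
  unfolding m2_def by (simp add: min_def max_def)

lemma m2_pair_gt: "a < b \<Longrightarrow> w < z \<Longrightarrow> m2 X {a,b} {z,w} = X a w * X b z - X a z * X b w"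
  unfolding m2_def by (simp add: min_def max_def insert_commute)


lemma pick_pair:
  assumes "finite V" "card V \<ge> 2" "\<forall>e\<in>E. card e = 2"
    "\<forall>T. T \<subseteq> V \<and> card T = 3 \<longrightarrow> (\<exists>e\<in>E. e \<subseteq> T)"
  shows "\<exists>u v. u\<in>V \<and> v\<in>V \<and> u\<noteq>v \<and> (\<forall>w\<in>V-{u,v}. {u,w}\<in>E \<or> {v,w}\<in>E)"
proof (cases "\<exists>u\<in>V. \<exists>v\<in>V. u \<noteq> v \<and> {u,v} \<notin> E")
  case True
  then obtain u v where uv: "u\<in>V" "v\<in>V" "u\<noteq>v" "{u,v}\<notin>E" by blast
  have "{u,w}\<in>E \<or> {v,w}\<in>E" if w: "w\<in>V-{u,v}" for w
  proof -
    have "{u,v,w} \<subseteq> V" "card {u,v,w} = 3" using uv w by auto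
    then obtain e where e: "e\<in>E" "e \<subseteq> {u,v,w}" using assms(4) by blast
    then obtain x y where xy: "e = {x,y}" "x\<noteq>y" using assms(3) card_2_iff by metis
    then have "e = {u,v} \<or> e = {u,w} \<or> e = {v,w}" using e(2) by (auto simp: insert_commute)
    then show ?thesis using e(1) uv(4) by blast
  qed
  then show ?thesis using uv by blast
next
  case False
  obtain u v where uv: "u\<in>V" "v\<in>V" "u\<noteq>v"
  proof -
    obtain W where "W \<subseteq> V" "card W = 2" using assms(2) obtain_subset_with_card_n by metis
    then show ?thesis using that card_2_iff by (metis insert_subset)
  qed
  have "\<forall>w\<in>V-{u,v}. {u,w}\<in>E"
  proof
    fix w assume "w \<in> V-{u,v}"
    then have "w \<in> V" "u \<noteq> w" by auto
    then show "{u,w}\<in>E" using False uv(1) by blast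
  qed
  then show ?thesis using uv by blast
qed

lemma core:
  "finite V \<Longrightarrow> card V = k \<Longrightarrow> \<forall>e\<in>E. card e = 2 \<Longrightarrow>
   \<forall>T. T \<subseteq> V \<and> card T = 3 \<longrightarrow> (\<exists>e\<in>E. e \<subseteq> T) \<Longrightarrow>
   \<exists>E0 X. E0 \<subseteq> E \<and> finite E0 \<and> (\<forall>e\<in>E0. e \<subseteq> V) \<and> card E0 = card (Bk lo k) \<and>
     (\<forall>c. (\<forall>w\<in>V. (\<Sum>b\<in>{lo..<lo+k}. c b * X b w) = 0) \<longrightarrow> (\<forall>b\<in>{lo..<lo+k}. c b = 0)) \<and>
     (\<forall>W. (\<forall>e\<in>E0. (\<Sum>S\<in>Bk lo k. W S * m2 X S e) = 0) \<longrightarrow> (\<forall>S\<in>Bk lo k. W S = 0))"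
proof (induction k arbitrary: lo V E rule: less_induct)
  case (less K)
  show ?case
  proof (cases "K < 2")
    case True
    have Bk0: "Bk lo K = {}" using True unfolding Bk_def by auto
    show ?thesis
    proof (intro exI[of _ "{}"] exI[of _ "\<lambda>b w. 1"] conjI allI impI)
      fix c :: "nat \<Rightarrow> rat"
      assume H: "\<forall>w\<in>V. (\<Sum>b\<in>{lo..<lo+K}. c b * 1) = 0"
      show "\<forall>b\<in>{lo..<lo+K}. c b = 0"
      proof (cases "K = 0")
        case True then show ?thesis by simp
      next
        case False
        then have "K = 1" using True by simp
        then obtain w where "w \<in> V" using less.prems(2) by (metis card_1_singletonE insertI1)
        then show ?thesis using H \<open>K = 1\<close> by auto
      qed
    qed (auto simp: Bk0)
  next
    case False
    then obtain k where K: "K = Suc (Suc k)" by (metis add_2_eq_Suc le_add_diff_inverse not_less)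
    obtain u v where uv: "u\<in>V" "v\<in>V" "u\<noteq>v" and cov: "\<forall>w\<in>V-{u,v}. {u,w}\<in>E \<or> {v,w}\<in>E"
      using pick_pair[OF less.prems(1) _ less.prems(3) less.prems(4)] less.prems(2) K by auto
    define V' where "V' = V - {u,v}"
    have finV': "finite V'" using less.prems(1) V'_def by simp
    have cardV': "card V' = k" using less.prems(2) K uv unfolding V'_def
      by (subst card_Diff_subset) auto
    define E' where "E' = {e\<in>E. e \<subseteq> V'}"
    have E'2: "\<forall>e\<in>E'. card e = 2" using less.prems(3) E'_def by auto
    have E'3: "\<forall>T. T \<subseteq> V' \<and> card T = 3 \<longrightarrow> (\<exists>e\<in>E'. e \<subseteq> T)"
    proof (intro allI impI)
      fix T assume T: "T \<subseteq> V' \<and> card T = 3"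
      then have "T \<subseteq> V \<and> card T = 3" unfolding V'_def by auto
      then obtain e where e: "e \<in> E" "e \<subseteq> T" using less.prems(4) by meson
      then have "e \<in> E'" using T unfolding E'_def by auto
      then show "\<exists>e\<in>E'. e \<subseteq> T" using e(2) by blast
    qed
    have "\<exists>E0 X. E0 \<subseteq> E' \<and> finite E0 \<and> (\<forall>e\<in>E0. e \<subseteq> V') \<and> card E0 = card (Bk (Suc lo) k) \<and>
     (\<forall>c. (\<forall>w\<in>V'. (\<Sum>b\<in>{Suc lo..<Suc lo+k}. c b * X b w) = 0) \<longrightarrow> (\<forall>b\<in>{Suc lo..<Suc lo+k}. c b = 0)) \<and>
     (\<forall>W. (\<forall>e\<in>E0. (\<Sum>S\<in>Bk (Suc lo) k. W S * m2 X S e) = 0) \<longrightarrow> (\<forall>S\<in>Bk (Suc lo) k. W S = 0))"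
      by (rule less.IH[OF _ finV' cardV' E'2 E'3]) (simp add: K)
    then obtain E0' X' where IH: "E0' \<subseteq> E'" "finite E0'" "\<forall>e\<in>E0'. e \<subseteq> V'" "card E0' = card (Bk (Suc lo) k)"
      "\<forall>c. (\<forall>w\<in>V'. (\<Sum>b\<in>{Suc lo..<Suc lo+k}. c b * X' b w) = 0) \<longrightarrow> (\<forall>b\<in>{Suc lo..<Suc lo+k}. c b = 0)"
      "\<forall>W. (\<forall>e\<in>E0'. (\<Sum>S\<in>Bk (Suc lo) k. W S * m2 X' S e) = 0) \<longrightarrow> (\<forall>S\<in>Bk (Suc lo) k. W S = 0)"
      by (elim exE conjE) (rule that)
    define f where "f w = (if {u,w} \<in> E then {u,w} else {v,w})" for w
    have fE: "f w \<in> E" if "w \<in> V'" for w using cov that unfolding f_def V'_def by auto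
    have fz: "\<exists>z. (z = u \<or> z = v) \<and> f w = {z,w}" for w unfolding f_def by auto
    define E0 where "E0 = E0' \<union> f ` V'"
    define hi where "hi = lo + k + 1"
    define X where "X b w = (if w = u then (if b = lo then 1 else 0)
        else if w = v then (if b = lo \<or> b = hi then 1 else 0)
        else if b = lo \<or> b = hi then 0 else X' b w)" for b w
    have finj: "inj_on f V'"
    proof
      fix w w' assume w: "w \<in> V'" "w' \<in> V'" "f w = f w'"
      obtain z where z: "z = u \<or> z = v" "f w' = {z,w'}" using fz by blast
      have "w \<in> f w" unfolding f_def by auto
      then have "w \<in> {z,w'}" using w z by simp
      moreover have "w \<noteq> z" using w(1) z(1) V'_def by auto
      ultimately show "w = w'" by auto
    qed
    have disj: "E0' \<inter> f ` V' = {}"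
    proof -
      have "\<not> f w \<subseteq> V'" for w
        using fz[of w] V'_def by auto
      then show ?thesis using IH(3) by blast
    qed
    have cardE0: "card E0 = card (Bk lo K)"
      unfolding E0_def K card_Bk_split
      using card_Un_disjoint[OF IH(2) finite_imageI[OF finV'] disj] card_image[OF finj] cardV' IH(4)
      by simp
    have E0sub: "E0 \<subseteq> E" using IH(1) fE E'_def E0_def by auto
    have E0V: "\<forall>e\<in>E0. e \<subseteq> V"
    proof
      fix e assume "e \<in> E0"
      then have "e \<in> E0' \<or> (\<exists>w\<in>V'. e = f w)" unfolding E0_def by blast
      then show "e \<subseteq> V"
      proof
        assume "e \<in> E0'" then show ?thesis using IH(3) V'_def by blast
      next
        assume "\<exists>w\<in>V'. e = f w"
        then obtain w where w: "w \<in> V'" "e = f w" by blast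
        obtain z where "z = u \<or> z = v" "f w = {z,w}" using fz by blast
        then show ?thesis using w uv V'_def by auto
      qed
    qed
    have finE0: "finite E0" using E0_def IH(2) finV' by simp
    have hi_ne: "hi \<noteq> lo" using hi_def by simp
    have rows: "\<forall>b\<in>{lo..<lo+K}. c b = 0"
      if H: "\<forall>w\<in>V. (\<Sum>b\<in>{lo..<lo+K}. c b * X b w) = 0" for c
    proof -
      have mid0: "(\<Sum>b\<in>{Suc lo..<Suc lo+k}. c b * X b w) = 0" if "w = u \<or> w = v" for w
        by (rule sum.neutral) (use that uv(3) in \<open>auto simp: X_def hi_def\<close>)
      have eq: "(\<Sum>b\<in>{lo..<lo+K}. c b * X b w) = c lo * X lo w + c hi * X hi w + (\<Sum>b\<in>{Suc lo..<Suc lo+k}. c b * X b w)" for w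
        by (simp only: K sum_rows_split hi_def)
      have Xu: "X lo u = 1" "X hi u = 0" using hi_ne by (simp_all add: X_def)
      have Xv: "X lo v = 1" "X hi v = 1" using uv(3) by (simp_all add: X_def)
      have Hu: "c lo = 0" using H[rule_format, OF uv(1)] eq[of u] mid0[of u] Xu by simp
      have Hv: "c lo + c hi = 0" using H[rule_format, OF uv(2)] eq[of v] mid0[of v] Xv by simp
      have Hw: "(\<Sum>b\<in>{Suc lo..<Suc lo+k}. c b * X' b w) = 0" if w: "w \<in> V'" for w
      proof -
        have wV: "w \<in> V" "w \<noteq> u" "w \<noteq> v" using w V'_def by auto
        have "(\<Sum>b\<in>{Suc lo..<Suc lo+k}. c b * X b w) = (\<Sum>b\<in>{Suc lo..<Suc lo+k}. c b * X' b w)"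
          by (rule sum.cong) (use wV in \<open>auto simp: X_def hi_def\<close>)
        moreover have "X lo w = 0" "X hi w = 0" using wV by (simp_all add: X_def)
        ultimately show ?thesis using H[rule_format, OF wV(1)] eq[of w] by simp
      qed
      have "\<forall>b\<in>{Suc lo..<Suc lo+k}. c b = 0" using IH(5) Hw by blast
      moreover have "{lo..<lo+K} = insert lo (insert hi {Suc lo..<Suc lo+k})" using K hi_def by auto
      ultimately show ?thesis using Hu Hv by auto
    qed
    have cols: "\<forall>S\<in>Bk lo K. W S = 0"
      if H: "\<forall>e\<in>E0. (\<Sum>S\<in>Bk lo K. W S * m2 X S e) = 0" for W
    proof -
      have step1: "(\<Sum>b\<in>{Suc lo..<Suc lo+k}. W {lo,b} * X' b w) = 0" if w: "w \<in> V'" for w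
      proof -
        have wV: "w \<in> V" "w \<noteq> u" "w \<noteq> v" using w V'_def by auto
        obtain z where z: "z = u \<or> z = v" "f w = {z,w}" using fz by blast
        have zw: "z \<noteq> w" using z(1) wV by auto
        define \<sigma> :: rat where "\<sigma> = (if z < w then 1 else -1)"
        define g where "g S = (if Min S = lo then X' (Max S) w else 0)" for S
        have trm: "m2 X S (f w) = \<sigma> * g S" if S: "S \<in> Bk lo K" for S
        proof -
          obtain a b where ab: "S = {a,b}" "lo \<le> a" "a < b" "b + 1 < lo + K" using Bk_elem[OF S] by blast
          have b: "b \<noteq> lo" "b \<noteq> hi" "a \<noteq> hi" using ab K hi_def by auto
          have MM: "Min S = a" "Max S = b" using ab by auto
          have Xaz: "X a z = (if a = lo then 1 else 0)" using z(1) b uv(3) by (auto simp: X_def)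
          have Xbz: "X b z = 0" using z(1) b uv(3) by (auto simp: X_def)
          have Xbw: "X b w = X' b w" using wV b by (auto simp: X_def)
          show ?thesis
          proof (cases "z < w")
            case True
            then show ?thesis unfolding z(2) ab(1) m2_pair_lt[OF ab(3) True]
              using MM Xaz Xbz Xbw ab(1) by (simp add: \<sigma>_def g_def)
          next
            case False
            then have "w < z" using zw by simp
            then show ?thesis unfolding z(2) ab(1) m2_pair_gt[OF ab(3) \<open>w < z\<close>]
              using MM Xaz Xbz Xbw ab(1) False by (simp add: \<sigma>_def g_def)
          qed
        qed
        have "0 = (\<Sum>S\<in>Bk lo K. W S * m2 X S (f w))" using H E0_def w by auto
        also have "\<dots> = \<sigma> * (\<Sum>S\<in>Bk lo K. W S * g S)"
          by (simp add: sum_distrib_left trm mult.left_commute cong: sum.cong)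
        also have "(\<Sum>S\<in>Bk lo K. W S * g S) = (\<Sum>b\<in>{Suc lo..<Suc lo+k}. W {lo,b} * X' b w)"
        proof -
          have g1: "g {lo,b} = X' b w" if "b \<in> {Suc lo..<Suc lo+k}" for b
            using that by (auto simp: g_def)
          have g2: "g S = 0" if S_in: "S \<in> Bk (Suc lo) k" for S
          proof -
            obtain a b where ab: "S = {a,b}" "Suc lo \<le> a" "a < b" using Bk_elem[OF S_in] by blast
            then show ?thesis by (auto simp: g_def)
          qed
          show ?thesis unfolding K sum_Bk_split by (simp add: g1 g2)
        qed
        finally show ?thesis using \<sigma>_def by (auto split: if_splits)
      qed
      have W1: "\<forall>b\<in>{Suc lo..<Suc lo+k}. W {lo,b} = 0"
        using IH(5)[rule_format, of "\<lambda>b. W {lo,b}"] step1 by blast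
      have step2: "(\<Sum>S\<in>Bk (Suc lo) k. W S * m2 X' S e) = 0" if e: "e \<in> E0'" for e
      proof -
        have eV: "e \<subseteq> V'" "card e = 2" using IH(3) e IH(1) E'2 by auto
        then have fin_e: "finite e" "e \<noteq> {}" by (auto simp: card_2_iff)
        have Me: "Min e \<in> V'" "Max e \<in> V'" using eV fin_e Min_in Max_in by blast+
        have eq: "m2 X S e = m2 X' S e" if S: "S \<in> Bk (Suc lo) k" for S
        proof -
          obtain a b where ab: "S = {a,b}" "Suc lo \<le> a" "a < b" "b + 1 < Suc lo + k" using Bk_elem[OF S] by blast
          have MM: "Min S = a" "Max S = b" using ab by auto
          have nb: "a \<noteq> lo" "a \<noteq> hi" "b \<noteq> lo" "b \<noteq> hi" using ab hi_def by auto
          have nu: "Min e \<noteq> u" "Min e \<noteq> v" "Max e \<noteq> u" "Max e \<noteq> v" using Me V'_def by auto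
          show ?thesis unfolding m2_def MM using nb nu by (simp add: X_def)
        qed
        have "0 = (\<Sum>S\<in>Bk lo K. W S * m2 X S e)" using H E0_def e by auto
        also have "\<dots> = (\<Sum>S\<in>Bk (Suc lo) k. W S * m2 X S e)"
          unfolding K sum_Bk_split using W1 by simp
        also have "\<dots> = (\<Sum>S\<in>Bk (Suc lo) k. W S * m2 X' S e)"
          by (rule sum.cong) (simp_all add: eq)
        finally show ?thesis by simp
      qed
      have W2: "\<forall>S\<in>Bk (Suc lo) k. W S = 0" using IH(6) step2 by blast
      show ?thesis using W1 W2 unfolding K Bk_split by blast
    qed
    show ?thesis
      apply (rule exI[of _ E0], rule exI[of _ X])
      apply (intro conjI)
           apply (rule E0sub)
          apply (rule finE0)
         apply (rule E0V)
        apply (rule cardE0)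
       apply (intro allI impI, erule rows)
      apply (intro allI impI, erule cols)
      done
  qed
qed



definition chi :: "(nat \<times> nat \<Rightarrow> rat) \<Rightarrow> ((nat \<times> nat) \<Rightarrow>\<^sub>0 nat) \<Rightarrow> rat" where
  "chi a m = (\<Prod>v\<in>Poly_Mapping.keys m. a v ^ Poly_Mapping.lookup m v)"

lemma chi_super: "finite S \<Longrightarrow> Poly_Mapping.keys m \<subseteq> S \<Longrightarrow> chi a m = (\<Prod>v\<in>S. a v ^ Poly_Mapping.lookup m v)"
  unfolding chi_def by (rule prod.mono_neutral_left) (auto simp: in_keys_iff)

lemma chi_add: "chi a (m + n) = chi a m * chi a n"
proof -
  let ?S = "Poly_Mapping.keys m \<union> Poly_Mapping.keys n"
  have "chi a (m + n) = (\<Prod>v\<in>?S. a v ^ Poly_Mapping.lookup (m + n) v)"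
    by (rule chi_super) (auto simp: keys_add)
  also have "\<dots> = (\<Prod>v\<in>?S. a v ^ Poly_Mapping.lookup m v) * (\<Prod>v\<in>?S. a v ^ Poly_Mapping.lookup n v)"
    by (simp add: lookup_add power_add prod.distrib)
  also have "\<dots> = chi a m * chi a n"
    by (simp add: chi_super[symmetric])
  finally show ?thesis .
qed

lemma chi_zero: "chi a 0 = 1" unfolding chi_def by simp

lemma chi_single: "chi a (Poly_Mapping.single v 1) = a v" unfolding chi_def by simp

definition ev :: "(nat \<times> nat \<Rightarrow> rat) \<Rightarrow> mpoly \<Rightarrow> rat" where
  "ev a p = (\<Sum>m\<in>Poly_Mapping.keys p. Poly_Mapping.lookup p m * chi a m)"

lemma ev_super: "finite S \<Longrightarrow> Poly_Mapping.keys p \<subseteq> S \<Longrightarrow> ev a p = (\<Sum>m\<in>S. Poly_Mapping.lookup p m * chi a m)"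
  unfolding ev_def by (rule sum.mono_neutral_left) (auto simp: in_keys_iff)

lemma ev_add: "ev a (p + q) = ev a p + ev a q"
proof -
  let ?S = "Poly_Mapping.keys p \<union> Poly_Mapping.keys q"
  have "ev a (p + q) = (\<Sum>m\<in>?S. Poly_Mapping.lookup (p + q) m * chi a m)"
    by (rule ev_super) (auto simp: keys_add)
  also have "\<dots> = (\<Sum>m\<in>?S. Poly_Mapping.lookup p m * chi a m) + (\<Sum>m\<in>?S. Poly_Mapping.lookup q m * chi a m)"
    by (simp add: lookup_add distrib_right sum.distrib)
  also have "\<dots> = ev a p + ev a q"
    by (simp add: ev_super[symmetric])
  finally show ?thesis .
qed

lemma ev_zero: "ev a 0 = 0" unfolding ev_def by simp

lemma ev_single: "ev a (Poly_Mapping.single m c) = c * chi a m"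
  unfolding ev_def by simp

lemma ev_sum: "ev a (sum f A) = (\<Sum>x\<in>A. ev a (f x))"
  by (induction A rule: infinite_finite_induct) (auto simp: ev_zero ev_add)

lemma poly_decomp: "p = (\<Sum>m\<in>Poly_Mapping.keys p. Poly_Mapping.single m (Poly_Mapping.lookup p m))"
  by (rule poly_mapping_eqI) (simp add: lookup_sum lookup_single when_def in_keys_iff)

lemma ev_mult: "ev a (p * q) = ev a p * ev a q"
proof -
  have "p * q = (\<Sum>m\<in>Poly_Mapping.keys p. Poly_Mapping.single m (Poly_Mapping.lookup p m)) * (\<Sum>n\<in>Poly_Mapping.keys q. Poly_Mapping.single n (Poly_Mapping.lookup q n))"
    using poly_decomp[of p] poly_decomp[of q] by simp
  also have "\<dots> = (\<Sum>m\<in>Poly_Mapping.keys p. \<Sum>n\<in>Poly_Mapping.keys q. Poly_Mapping.single (m + n) (Poly_Mapping.lookup p m * Poly_Mapping.lookup q n))"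
    by (simp add: sum_product mult_single)
  finally have "ev a (p * q) = (\<Sum>m\<in>Poly_Mapping.keys p. \<Sum>n\<in>Poly_Mapping.keys q. Poly_Mapping.lookup p m * Poly_Mapping.lookup q n * (chi a m * chi a n))"
    by (simp add: ev_sum ev_single chi_add)
  also have "\<dots> = ev a p * ev a q"
    unfolding ev_def sum_product by (simp add: ac_simps)
  finally show ?thesis .
qed

lemma ev_one: "ev a 1 = 1"
proof -
  have "(1::mpoly) = Poly_Mapping.single 0 1" by simp
  then have "ev a 1 = ev a (Poly_Mapping.single 0 1)" by (rule arg_cong)
  also have "\<dots> = 1" using ev_single[of a 0 1] chi_zero[of a] by simp
  finally show ?thesis .
qed

interpretation ev_hom: comm_ring_hom "ev a"
proof -
  have h0: "ev a 0 = 0" by (rule ev_zero)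
  have hu: "ev a (- x) = - ev a x" for x
    using ev_add[of a x "-x"] h0 by (simp add: eq_neg_iff_add_eq_0)
  show "comm_ring_hom (ev a)"
    by unfold_locales (simp_all add: ev_zero ev_one ev_add ev_mult)
qed

definition fr :: "mpoly \<Rightarrow> ratfun" where "fr p = Fract p 1"

interpretation fr_hom: comm_ring_hom fr
  by unfold_locales (simp_all add: fr_def Zero_fract_def One_fract_def add_fract mult_fract)

lemma fr_eq0: "fr p = 0 \<longleftrightarrow> p = 0"
  by (simp add: fr_def Zero_fract_def eq_fract)



lemma det1: "det (mat 1 1 g) = (g (0,0) :: 'a :: comm_ring_1)"
  apply (subst laplace_expansion_row[where i=0 and n=1])
    apply auto
  apply (simp add: cofactor_def mat_delete_def)
  done

lemma det2: "det (mat 2 2 f) = (f (0,0) * f (1,1) - f (0,1) * f (1,0) :: 'a :: comm_ring_1)"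
  apply (subst laplace_expansion_row[where i=0 and n=2])
    apply auto
  apply (simp add: cofactor_def mat_delete_def numeral_2_eq_2 lessThan_Suc det1[unfolded One_nat_def])
  done

lemma sorted2: "card S = 2 \<Longrightarrow> sorted_list_of_set S = [Min S, Max S]"
proof -
  assume "card S = 2"
  then obtain x y where xy: "S = {x,y}" "x \<noteq> y" using card_2_iff by metis
  show ?thesis
  proof (cases "x < y")
    case True then show ?thesis using xy by simp
  next
    case False then have "y < x" using xy by simp
    then show ?thesis using xy by (simp add: insert_commute)
  qed
qed

definition mono2 :: "nat \<Rightarrow> nat \<Rightarrow> mpoly" where
  "mono2 i j = Poly_Mapping.single (Poly_Mapping.single (i, j) 1) 1"

definition pm :: "nat set \<Rightarrow> nat set \<Rightarrow> mpoly" where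
  "pm S T = mono2 (Min S) (Min T) * mono2 (Max S) (Max T) - mono2 (Min S) (Max T) * mono2 (Max S) (Min T)"

lemma minor_pm: "card S = 2 \<Longrightarrow> card T = 2 \<Longrightarrow> minor S T = fr (pm S T)"
  unfolding minor_def pm_def
  by (simp add: sorted2 det2 fr_hom.hom_mult fr_hom.hom_minus var_def fr_def[symmetric] mono2_def)

lemma ev_pm: "ev (\<lambda>(i,j). X i j) (pm S T) = m2 X S T"
  unfolding pm_def m2_def mono2_def
  by (simp add: ev_hom.hom_mult ev_hom.hom_minus ev_single chi_single chi_single[unfolded One_nat_def])

lemma enum_fam: "finite F \<Longrightarrow> set (enum_fam F) = F \<and> distinct (enum_fam F)"
  unfolding enum_fam_def using finite_distinct_list[of F] by (rule someI_ex)

lemma B_eq: "B n = Bk 1 n"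
  unfolding B_def Bk_def
  apply (rule Collect_cong)
  apply (rule iffI)
   apply (elim exE conjE, intro exI conjI, assumption+, linarith, linarith)
  apply (elim exE conjE, intro exI conjI, assumption+, linarith, linarith)
  done


lemma rank_upper:
  fixes A :: "'a::field mat"
  assumes A: "A \<in> carrier_mat n nc"
  shows "vec_space.rank n A \<le> n"
proof -
  interpret vs: vec_space "TYPE('a)" n .
  obtain S where S: "maximal S (\<lambda>T. T \<subseteq> set (cols A) \<and> vs.lin_indpt T)"
    using maximal_exists[of "(\<lambda>T. T \<subseteq> set (cols A) \<and> vs.lin_indpt T)" "card (set (cols A))" "{}"]
    by (meson List.finite_set card_mono empty_iff empty_subsetI vs.finite_lin_indpt2 rev_finite_subset)
  have r: "vs.rank A = card S" using vs.rank_card_indpt[OF A S] .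
  have S1: "S \<subseteq> set (cols A)" "vs.lin_indpt S" using S unfolding maximal_def by auto
  have Sc: "S \<subseteq> carrier_vec n" "vs.lin_indpt S" using S1 cols_dim[of A] A by auto
  have "card S \<le> vs.dim" using vs.li_le_dim(2)[OF vs.fin_dim] Sc by simp
  then show ?thesis using r vs.dim_is_n by simp
qed

theorem mainTheorem2:
  fixes n :: nat and E :: "nat set set"
  assumes graph: "E \<subseteq> {e. e \<subseteq> {1..n} \<and> card e = 2}"
    and triples: "\<forall>T. T \<subseteq> {1..n} \<and> card T = 3 \<longrightarrow> (\<exists>e\<in>E. e \<subseteq> T)"
  shows "dominates E (B n)"
proof -
  have E2: "\<forall>e\<in>E. card e = 2" using graph by auto
  have cardV: "card {1..n} = n" by simp
  have "\<exists>E0 X. E0 \<subseteq> E \<and> finite E0 \<and> (\<forall>e\<in>E0. e \<subseteq> {1..n}) \<and> card E0 = card (Bk 1 n) \<and>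
     (\<forall>c. (\<forall>w\<in>{1..n}. (\<Sum>b\<in>{1..<1+n}. c b * X b w) = 0) \<longrightarrow> (\<forall>b\<in>{1..<1+n}. c b = 0)) \<and>
     (\<forall>W. (\<forall>e\<in>E0. (\<Sum>S\<in>Bk 1 n. W S * m2 X S e) = 0) \<longrightarrow> (\<forall>S\<in>Bk 1 n. W S = 0))"
    by (rule core[OF finite_atLeastAtMost cardV E2 triples])
  then obtain E0 X0 where E0: "E0 \<subseteq> E" "finite E0" "card E0 = card (B n)"
    and key: "\<forall>W. (\<forall>e\<in>E0. (\<Sum>S\<in>B n. W S * m2 X0 S e) = 0) \<longrightarrow> (\<forall>S\<in>B n. W S = 0)"
    unfolding B_eq[symmetric] by blast
  have finB: "finite (B n)" unfolding B_eq by (rule Bk_finite)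
  have finE: "finite E" using graph by (rule finite_subset) simp
  define m where "m = card (B n)"
  define rs where "rs = enum_fam (B n)"
  define cs where "cs = enum_fam E0"
  define es where "es = enum_fam E"
  have rs: "set rs = B n" "distinct rs" "length rs = m"
    using enum_fam[OF finB] distinct_card unfolding rs_def m_def by metis+
  have cs: "set cs = E0" "distinct cs" "length cs = m"
    using enum_fam[OF E0(2)] distinct_card E0(3) unfolding cs_def m_def by metis+
  have es: "set es = E" "distinct es" "length es = card E"
    using enum_fam[OF finE] distinct_card unfolding es_def by metis+
  have B2: "card S = 2" if "S \<in> B n" for S using that unfolding B_def by auto
  have rs2: "card (rs ! i) = 2" if "i < m" for i using B2 rs that nth_mem by metis
  have cs2: "card (cs ! j) = 2" if "j < m" for j using E2 E0(1) cs that nth_mem by (metis subsetD)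
  define R :: "rat mat" where "R = mat m m (\<lambda>(i,j). m2 X0 (rs!i) (cs!j))"
  have Rc: "R \<in> carrier_mat m m" unfolding R_def by simp
  have bij: "bij_betw ((!) rs) {..<m} (B n)" using bij_betw_nth[of rs "{..<m}" "B n"] rs by simp
  have detR: "det R \<noteq> 0"
  proof
    assume "det R = 0"
    then have "det (transpose_mat R) = 0" using det_transpose[OF Rc] by simp
    then obtain v where v: "v \<in> carrier_vec m" "v \<noteq> 0\<^sub>v m" "transpose_mat R *\<^sub>v v = 0\<^sub>v m"
      using det_0_iff_vec_prod_zero_field[of "transpose_mat R" m] Rc by auto
    define W where "W S = v $ (inv_into {..<m} ((!) rs) S)" for S
    have Wrs: "W (rs ! i) = v $ i" if "i < m" for i
      unfolding W_def using bij that by (simp add: bij_betw_def inv_into_f_f)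
    have "\<forall>e\<in>E0. (\<Sum>S\<in>B n. W S * m2 X0 S e) = 0"
    proof
      fix e assume "e \<in> E0"
      then obtain j where j: "j < m" "e = cs ! j" using cs by (metis in_set_conv_nth)
      have "(\<Sum>S\<in>B n. W S * m2 X0 S e) = (\<Sum>i\<in>{..<m}. W (rs ! i) * m2 X0 (rs ! i) e)"
        by (rule sum.reindex_bij_betw[OF bij, symmetric])
      also have "\<dots> = (\<Sum>i\<in>{..<m}. v $ i * m2 X0 (rs ! i) (cs ! j))"
        using Wrs j by simp
      also have "\<dots> = (transpose_mat R *\<^sub>v v) $ j"
        using j v(1) Rc by (simp add: scalar_prod_def R_def lessThan_atLeast0 mult.commute)
      also have "\<dots> = 0" using v(3) j by simp
      finally show "(\<Sum>S\<in>B n. W S * m2 X0 S e) = 0" .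
    qed
    then have W0: "\<forall>S\<in>B n. W S = 0" using key by blast
    have "v = 0\<^sub>v m"
    proof (rule eq_vecI)
      fix i assume "i < dim_vec (0\<^sub>v m :: rat vec)"
      then have i: "i < m" by simp
      then have "rs ! i \<in> B n" using rs nth_mem by metis
      then show "v $ i = 0\<^sub>v m $ i" using W0 Wrs[OF i] i by simp
    qed (use v(1) in simp)
    then show False using v(2) by simp
  qed
  define a where "a = (\<lambda>(i,j). X0 i j)"
  define P where "P = mat m m (\<lambda>(i,j). pm (rs!i) (cs!j))"
  have "map_mat (ev a) P = R"
    by (rule eq_matI) (simp_all add: P_def R_def a_def ev_pm)
  then have "ev a (det P) = det R" using ev_hom.hom_det by metis
  then have detP: "det P \<noteq> 0" using detR ev_zero by auto
  define A0 where "A0 = mat m m (\<lambda>(i,j). minor (rs!i) (cs!j))"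
  have "A0 = map_mat fr P"
    by (rule eq_matI) (simp_all add: A0_def P_def minor_pm rs2 cs2)
  then have "det A0 = fr (det P)" using fr_hom.hom_det by metis
  then have detA0: "det A0 \<noteq> 0" using detP fr_eq0 by simp
  define A where "A = compound_submat (B n) E"
  have A_def': "A = mat m (card E) (\<lambda>(i,j). minor (rs ! i) (es ! j))"
    unfolding A_def compound_submat_def rs_def es_def m_def ..
  have Ac: "A \<in> carrier_mat m (card E)" unfolding A_def' by simp
  have A0c: "A0 \<in> carrier_mat m m" unfolding A0_def by simp
  interpret vs: vec_space "TYPE(ratfun)" m .
  have rk0: "vs.rank A0 = m" using vs.det_rank_iff[OF A0c] detA0 by simp
  have dist: "distinct (cols A0)"
    using vs.non_distinct_low_rank[OF A0c] rk0 by (metis less_irrefl)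
  have li: "vs.lin_indpt (set (cols A0))" by (rule vs.full_rank_lin_indpt[OF A0c rk0 dist])
  have sub: "set (cols A0) \<subseteq> set (cols A)"
  proof
    fix c assume "c \<in> set (cols A0)"
    then obtain j where j: "j < m" "c = col A0 j" using A0c by (auto simp: in_set_conv_nth)
    have "cs ! j \<in> E" using cs j E0(1) nth_mem by (metis subsetD)
    then obtain j' where j': "j' < card E" "cs ! j = es ! j'" using es by (metis in_set_conv_nth)
    have "c = col A j'" using j j' unfolding A0_def A_def' by simp
    then show "c \<in> set (cols A)" using j' Ac by (auto simp: in_set_conv_nth)
  qed
  have "card (set (cols A0)) = m" using dist A0c distinct_card by fastforce
  then have lower: "m \<le> vs.rank A" using vs.rank_ge_card_indpt[OF Ac sub li] by simp
  have upper: "vs.rank A \<le> m" by (rule rank_upper[OF Ac])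
  show ?thesis unfolding dominates_def using lower upper A_def m_def by simp
qed

end
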